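(* Let $v_1\ge v_2>0$, $m\in\mathbb{Z}_{\ge0}$ and $0<\beta\le\alpha<1$. A strategy profile $(X,Y)$ with $\mathbf{E}(X)=m+\alpha$ and $\mathbf{E}(Y)=m+\beta$ is a Nash equilibrium of the discrete all-pay auction with valuations $v_1,v_2$ if and only if $v_1/2=v_2/2=m+1$, $X=(1-\alpha)U_{\mathrm{E}}^m+\alpha U_{\mathrm{O}}^{m+1}$ and $Y=(1-\beta)U_{\mathrm{E}}^m+\beta U_{\mathrm{O}}^{m+1}$. In this case the equilibrium payoffs are $P^1(X,Y)=1-\beta$ and $P^2(Y,X)=1-\alpha$.
   Context: Discrete all-pay auction: two players, 1 and 2, value a prize at $v_1$ and $v_2$ respectively, where $v_1\ge v_2>0$. A (mixed) strategy is a probability distribution on $\mathbb{Z}_{\ge 0}$ with finite mean, identified with a $\mathbb{Z}_{\ge0}$-valued random variable; the two players' choices are independent. If player 1 uses $X$ and player 2 uses $Y$, the expected payoffs are $P^1(X,Y)=v_1\Pr(X>Y)+\frac{v_1}{2}\Pr(X=Y)-\mathbf{E}(X)$ and $P^2(Y,X)=v_2\Pr(Y>X)+\frac{v_2}{2}\Pr(X=Y)-\mathbf{E}(Y)$. A Nash equilibrium of the all-pay auction is a pair $(X,Y)$ with $P^1(X,Y)\ge P^1(X',Y)$ and $P^2(Y,X)\ge P^2(Y',X)$ for all strategies $X',Y'$. $\lambda A+(1-\lambda)B$ denotes the mixture of distributions $A$ and $B$. Special distributions: for $m\ge1$, $U_{\mathrm{O}}^m$ is the uniform distribution on $\{1,3,\dots,2m-1\}$;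 for $m\ge0$, $U_{\mathrm{E}}^m$ is the uniform distribution on $\{0,2,\dots,2m\}$. *)

theory Defs
  imports "HOL-Probability.Probability"
begin

definition strategy :: "nat pmf \<Rightarrow> bool" where
  "strategy X \<longleftrightarrow> integrable (measure_pmf X) (\<lambda>x. real x)"

definition mean :: "nat pmf \<Rightarrow> real" where
  "mean X = measure_pmf.expectation X (\<lambda>x. real x)"

definition payoff :: "real \<Rightarrow> nat pmf \<Rightarrow> nat pmf \<Rightarrow> real" where
  "payoff v X Y =
     v * measure_pmf.prob (pair_pmf X Y) {(x, y). x > y}
     + v / 2 * measure_pmf.prob (pair_pmf X Y) {(x, y). x = y}
     - mean X"

definition nash :: "real \<Rightarrow> real \<Rightarrow> nat pmf \<Rightarrow> nat pmf \<Rightarrow> bool" where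
  "nash v1 v2 X Y \<longleftrightarrow> strategy X \<and> strategy Y \<and>
     (\<forall>X'. strategy X' \<longrightarrow> payoff v1 X' Y \<le> payoff v1 X Y) \<and>
     (\<forall>Y'. strategy Y' \<longrightarrow> payoff v2 Y' X \<le> payoff v2 Y X)"

definition mix :: "real \<Rightarrow> nat pmf \<Rightarrow> nat pmf \<Rightarrow> nat pmf" where
  "mix l A B = bind_pmf (bernoulli_pmf l) (\<lambda>b. if b then A else B)"

text \<open>U_O^m: uniform on {1,3,...,2m-1} (m \<ge> 1); U_E^m: uniform on {0,2,...,2m}.\<close>
definition U_O :: "nat \<Rightarrow> nat pmf" where
  "U_O m = pmf_of_set {2 * k + 1 | k. k < m}"

definition U_E :: "nat \<Rightarrow> nat pmf" where
  "U_E m = pmf_of_set {2 * k | k. k \<le> m}"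

end

theory Submission
  imports Defs
begin


definition W :: "nat pmf \<Rightarrow> nat \<Rightarrow> real" where
  "W Y k = measure_pmf.prob Y {..<k} + pmf Y k / 2"

lemma prob_bind_pmf:
  "measure_pmf.prob (bind_pmf M f) A = measure_pmf.expectation M (\<lambda>x. measure_pmf.prob (f x) A)"
proof -
  have "ennreal (measure_pmf.prob (bind_pmf M f) A) = (\<integral>\<^sup>+x. ennreal (measure_pmf.prob (f x) A) \<partial>M)"
    by (simp add: measure_pmf.emeasure_eq_measure[symmetric])
  also have "\<dots> = ennreal (measure_pmf.expectation M (\<lambda>x. measure_pmf.prob (f x) A))"
    by (intro nn_integral_eq_integral measure_pmf.integrable_const_bound[where B=1]) auto
  finally show ?thesis by (simp add: measure_nonneg integral_nonneg_AE)
qed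

lemma prob_pair_pmf:
  "measure_pmf.prob (pair_pmf X Y) A = measure_pmf.expectation X (\<lambda>x. measure_pmf.prob Y {y. (x,y) \<in> A})"
proof -
  have "pair_pmf X Y = bind_pmf X (\<lambda>x. map_pmf (Pair x) Y)"
    by (simp add: pair_pmf_def map_pmf_def)
  then show ?thesis by (simp add: prob_bind_pmf vimage_def)
qed



lemma integrable_bounded_pmf:
  fixes f :: "'a \<Rightarrow> real"
  assumes "\<And>x. \<bar>f x\<bar> \<le> B"
  shows "integrable (measure_pmf X) f"
  by (rule measure_pmf.integrable_const_bound[where B=B]) (use assms in auto)

lemma W_bound: "\<bar>W Y k\<bar> \<le> 2"
proof -
  have h1: "measure_pmf.prob Y {..<k} \<le> 1" by simp
  have h2: "pmf Y k \<le> 1" by (simp add: pmf_le_1)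
  show ?thesis unfolding W_def using h1 h2 pmf_nonneg[of Y k] measure_nonneg[of Y "{..<k}"] by linarith
qed

lemma integrable_W: "integrable (measure_pmf X) (\<lambda>k. W Y k)"
  by (rule integrable_bounded_pmf[OF W_bound])

lemma EW_pair: "measure_pmf.expectation X (W Y) =
   measure_pmf.prob (pair_pmf X Y) {(x,y). x > y} + measure_pmf.prob (pair_pmf X Y) {(x,y). x = y} / 2"
proof -
  have 1: "measure_pmf.prob (pair_pmf X Y) {(x,y). x > y} = measure_pmf.expectation X (\<lambda>x. measure_pmf.prob Y {..<x})"
    by (simp add: prob_pair_pmf lessThan_def)
  have 2: "measure_pmf.prob (pair_pmf X Y) {(x,y). x = y} = measure_pmf.expectation X (\<lambda>x. pmf Y x)"
    by (simp add: prob_pair_pmf measure_pmf_single)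
  have i1: "integrable (measure_pmf X) (\<lambda>x. measure_pmf.prob Y {..<x})"
    by (rule integrable_bounded_pmf[where B=1]) auto
  have i2: "integrable (measure_pmf X) (\<lambda>x. pmf Y x / 2)"
    by (rule integrable_bounded_pmf[where B=1]) (simp, rule order.trans[OF pmf_le_1], simp)
  show ?thesis unfolding 1 2 W_def
    using Bochner_Integration.integral_add[OF i1 i2] by simp
qed

lemma payoff_W: "payoff v X Y = v * measure_pmf.expectation X (W Y) - mean X"
  unfolding payoff_def EW_pair by (simp add: algebra_simps)

lemma EW_sum: "measure_pmf.expectation X (W Y) + measure_pmf.expectation Y (W X) = 1"
proof -
  have sw: "measure_pmf.prob (pair_pmf Y X) A = measure_pmf.prob (pair_pmf X Y) ((\<lambda>(x, y). (y, x)) -` A)" for A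
    by (subst pair_commute_pmf) (simp add: measure_map_pmf)
  have a: "(\<lambda>(x, y). (y, x)) -` {(x::nat,y). x > y} = {(x,y). y > x}" by auto
  have b: "(\<lambda>(x, y). (y, x)) -` {(x::nat,y). x = y} = {(x,y). x = y}" by auto
  have "measure_pmf.prob (pair_pmf X Y) ({(x,y). x > y} \<union> {(x,y). y > x} \<union> {(x,y). x = y}) =
        measure_pmf.prob (pair_pmf X Y) {(x,y). x > y} + measure_pmf.prob (pair_pmf X Y) {(x,y). y > x}
        + measure_pmf.prob (pair_pmf X Y) {(x,y). x = y}"
    by (subst measure_pmf.finite_measure_Union; auto)+
  moreover have "{(x::nat,y). x > y} \<union> {(x,y). y > x} \<union> {(x,y). x = y} = UNIV" by auto
  ultimately show ?thesis
    unfolding EW_pair sw a b by simp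
qed



lemma W_0: "W Y 0 = pmf Y 0 / 2"
  unfolding W_def by simp

lemma W_Suc: "W Y (Suc k) = W Y k + (pmf Y k + pmf Y (Suc k)) / 2"
proof -
  have "measure_pmf.prob Y {..<Suc k} = measure_pmf.prob Y ({..<k} \<union> {k})"
    by (rule arg_cong[where f="measure_pmf.prob Y"]) auto
  also have "\<dots> = measure_pmf.prob Y {..<k} + pmf Y k"
    by (subst measure_pmf.finite_measure_Union) (auto simp: measure_pmf_single)
  finally show ?thesis unfolding W_def by (simp add: field_simps)
qed

definition SE :: "nat \<Rightarrow> nat set" where "SE m = {2 * k | k. k \<le> m}"
definition SO :: "nat \<Rightarrow> nat set" where "SO m = {2 * k + 1 | k. k < m}"

lemma SE_img: "SE m = (\<lambda>k. 2*k) ` {..m}" unfolding SE_def by auto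
lemma SO_img: "SO m = (\<lambda>k. 2*k+1) ` {..<m}" unfolding SO_def by auto

lemma SE_mem: "n \<in> SE m \<longleftrightarrow> even n \<and> n \<le> 2*m"
  unfolding SE_def by (auto elim!: evenE)
lemma SO_mem: "n \<in> SO m \<longleftrightarrow> odd n \<and> n < 2*m"
  unfolding SO_def by (auto elim!: oddE)

lemma SE_fin: "finite (SE m)" by (simp add: SE_img)
lemma SE_ne: "SE m \<noteq> {}" by (simp add: SE_img)
lemma SE_card: "card (SE m) = m + 1" unfolding SE_img by (subst card_image) (auto simp: inj_on_def)
lemma SO_fin: "finite (SO m)" by (simp add: SO_img)
lemma SO_card: "card (SO m) = m" unfolding SO_img by (subst card_image) (auto simp: inj_on_def)
lemma SO_ne: "SO (Suc m) \<noteq> {}" unfolding SO_img by auto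

lemma U_E_eq: "U_E m = pmf_of_set (SE m)" unfolding U_E_def SE_def ..
lemma U_O_eq: "U_O m = pmf_of_set (SO m)" unfolding U_O_def SO_def ..

lemma pmf_U_E: "pmf (U_E m) n = (if even n \<and> n \<le> 2*m then 1 / (real m + 1) else 0)"
  unfolding U_E_eq using SE_fin SE_ne by (simp add: SE_mem SE_card indicator_def)

lemma pmf_U_O: "pmf (U_O (Suc m)) n = (if odd n \<and> n \<le> 2*m+1 then 1 / (real m + 1) else 0)"
  unfolding U_O_eq using SO_fin SO_ne[of m] by (auto simp: SO_mem SO_card indicator_def)

lemma set_U_E: "set_pmf (U_E m) = SE m" unfolding U_E_eq using SE_fin SE_ne by simp
lemma set_U_O: "set_pmf (U_O (Suc m)) = SO (Suc m)" unfolding U_O_eq using SO_fin SO_ne by simp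

lemma strategy_finite: "finite (set_pmf X) \<Longrightarrow> strategy X"
  unfolding strategy_def by (rule integrable_measure_pmf_finite)

lemma strategy_U_E: "strategy (U_E m)" by (rule strategy_finite) (simp add: set_U_E SE_fin)
lemma strategy_U_O: "strategy (U_O (Suc m))" by (rule strategy_finite) (simp add: set_U_O SO_fin)
lemma strategy_return: "strategy (return_pmf k)" by (rule strategy_finite) simp

lemma sum_double: "(\<Sum>k\<le>m. 2 * real k) = real m * (real m + 1)"
  by (induction m) (auto simp: algebra_simps)
lemma sum_odd: "(\<Sum>k\<le>m. 1 + 2 * real k) = (real m + 1)^2"
  by (induction m) (auto simp: algebra_simps power2_eq_square)

lemma mean_U_E: "mean (U_E m) = real m"
proof -
  have 1: "mean (U_E m) = (\<Sum>n\<in>SE m. real n) / real (card (SE m))"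
    unfolding mean_def U_E_eq by (rule integral_pmf_of_set[OF SE_ne SE_fin])
  have 2: "(\<Sum>n\<in>SE m. real n) = (\<Sum>k\<le>m. 2 * real k)"
    unfolding SE_img by (subst sum.reindex) (auto simp: inj_on_def)
  have c: "real (card (SE m)) = real m + 1" by (simp add: SE_card)
  have nz: "real m + 1 \<noteq> 0" by simp
  show ?thesis unfolding 1 2 sum_double c using nonzero_mult_div_cancel_right[OF nz] by simp
qed

lemma mean_U_O: "mean (U_O (Suc m)) = real m + 1"
proof -
  have 1: "mean (U_O (Suc m)) = (\<Sum>n\<in>SO (Suc m). real n) / real (card (SO (Suc m)))"
    unfolding mean_def U_O_eq by (rule integral_pmf_of_set[OF SO_ne SO_fin])
  have 2: "(\<Sum>n\<in>SO (Suc m). real n) = (\<Sum>k\<le>m. 1 + 2 * real k)"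
    unfolding SO_img by (subst sum.reindex) (auto simp: inj_on_def lessThan_Suc_atMost)
  have c: "real (card (SO (Suc m))) = real m + 1" by (simp add: SO_card)
  have nz: "real m + 1 \<noteq> 0" by simp
  show ?thesis unfolding 1 2 sum_odd c power2_eq_square using nonzero_mult_div_cancel_right[OF nz] by simp
qed

lemma pmf_mix: "0 \<le> l \<Longrightarrow> l \<le> 1 \<Longrightarrow> pmf (mix l A B) n = l * pmf A n + (1 - l) * pmf B n"
  unfolding mix_def by (simp add: pmf_bind)

lemma set_mix: "set_pmf (mix l A B) \<subseteq> set_pmf A \<union> set_pmf B"
  unfolding mix_def by (auto split: if_splits)


lemma W_U_E: "W (U_E m) k = (if k \<le> 2*m+1 then (real k + 1) / (2 * real m + 2) else 1)"
proof (induction k)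
  case 0 then show ?case by (simp add: W_0 pmf_U_E)
next
  case (Suc k)
  show ?case
  proof (cases "k \<le> 2*m")
    case True
    have p: "pmf (U_E m) k + pmf (U_E m) (Suc k) = 1 / (real m + 1)"
    proof (cases "even k")
      case True
      then show ?thesis using \<open>k \<le> 2*m\<close> by (simp add: pmf_U_E)
    next
      case False
      then have "Suc k \<le> 2*m" using \<open>k \<le> 2*m\<close> by presburger
      then show ?thesis using False by (simp add: pmf_U_E)
    qed
    have w: "W (U_E m) k = (real k + 1) / (2 * real m + 2)" using Suc.IH True by simp
    have "W (U_E m) (Suc k) = (real k + 1) / (2 * real m + 2) + 1 / (real m + 1) / 2"
      unfolding W_Suc w p ..
    also have "\<dots> = (real (Suc k) + 1) / (2 * real m + 2)"
      by (simp add: field_simps)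
    finally show ?thesis using True by simp
  next
    case False
    have p: "pmf (U_E m) k + pmf (U_E m) (Suc k) = 0"
      using False by (simp add: pmf_U_E)
    have w: "W (U_E m) k = 1"
    proof (cases "k = 2*m+1")
      case True then show ?thesis using Suc.IH by simp
    next
      case False then show ?thesis using Suc.IH \<open>\<not> k \<le> 2*m\<close> by simp
    qed
    show ?thesis unfolding W_Suc w p using False by simp
  qed
qed

lemma W_U_O: "W (U_O (Suc m)) k = (if k \<le> 2*m+2 then real k / (2 * real m + 2) else 1)"
proof (induction k)
  case 0 then show ?case by (simp add: W_0 pmf_U_O)
next
  case (Suc k)
  show ?case
  proof (cases "k \<le> 2*m+1")
    case True
    have p: "pmf (U_O (Suc m)) k + pmf (U_O (Suc m)) (Suc k) = 1 / (real m + 1)"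
    proof (cases "even k")
      case False
      then show ?thesis using \<open>k \<le> 2*m+1\<close> by (simp add: pmf_U_O)
    next
      case True
      then have "Suc k \<le> 2*m+1" using \<open>k \<le> 2*m+1\<close> by presburger
      then show ?thesis using True by (simp add: pmf_U_O)
    qed
    have w: "W (U_O (Suc m)) k = real k / (2 * real m + 2)" using Suc.IH True by simp
    have "W (U_O (Suc m)) (Suc k) = real k / (2 * real m + 2) + 1 / (real m + 1) / 2"
      unfolding W_Suc w p ..
    also have "\<dots> = real (Suc k) / (2 * real m + 2)"
      by (simp add: field_simps)
    finally show ?thesis using True by simp
  next
    case False
    have p: "pmf (U_O (Suc m)) k + pmf (U_O (Suc m)) (Suc k) = 0"
      using False by (simp add: pmf_U_O)
    have w: "W (U_O (Suc m)) k = 1"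
    proof (cases "k = 2*m+2")
      case True then show ?thesis using Suc.IH by simp
    next
      case False then show ?thesis using Suc.IH \<open>\<not> k \<le> 2*m+1\<close> by simp
    qed
    show ?thesis unfolding W_Suc w p using False by simp
  qed
qed




lemma integrable_W_lin: "strategy X \<Longrightarrow> integrable (measure_pmf X) (\<lambda>k. v * W Y k - real k)"
  unfolding strategy_def by (intro Bochner_Integration.integrable_diff integrable_mult_right integrable_W)

lemma payoff_expect: "strategy X \<Longrightarrow> payoff v X Y = measure_pmf.expectation X (\<lambda>k. v * W Y k - real k)"
  unfolding payoff_W mean_def strategy_def
  by (subst Bochner_Integration.integral_diff) (auto intro: integrable_W)

lemma payoff_return: "payoff v (return_pmf k) Y = v * W Y k - real k"
  by (simp add: payoff_expect strategy_return)

lemma prob_mix: "0 \<le> l \<Longrightarrow> l \<le> 1 \<Longrightarrow>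
   measure_pmf.prob (mix l A B) S = l * measure_pmf.prob A S + (1 - l) * measure_pmf.prob B S"
  unfolding mix_def prob_bind_pmf by (simp add: algebra_simps)

lemma W_mix: "0 \<le> l \<Longrightarrow> l \<le> 1 \<Longrightarrow> W (mix l A B) k = l * W A k + (1 - l) * W B k"
  unfolding W_def by (simp add: prob_mix pmf_mix field_simps)

lemma W_U_E_le: "W (U_E m) k \<le> (real k + 1) / (2 * real m + 2)"
proof (cases "k \<le> 2*m+1")
  case True then show ?thesis by (simp add: W_U_E)
next
  case False
  then have "2 * real m + 2 \<le> real k + 1" by simp
  then show ?thesis using False by (simp add: W_U_E field_simps)
qed

lemma W_U_O_le: "W (U_O (Suc m)) k \<le> real k / (2 * real m + 2)"
proof (cases "k \<le> 2*m+2")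
  case True then show ?thesis by (simp add: W_U_O)
next
  case False
  then have "2 * real m + 2 \<le> real k" by simp
  then show ?thesis using False by (simp add: W_U_O field_simps)
qed

lemma E_W_le:
  assumes "strategy Y" "\<And>k. W A k \<le> c * real k + d"
  shows "measure_pmf.expectation Y (W A) \<le> c * mean Y + d"
proof -
  have "measure_pmf.expectation Y (W A) \<le> measure_pmf.expectation Y (\<lambda>k. c * real k + d)"
    using assms unfolding strategy_def
    by (intro integral_mono integrable_W) auto
  also have "\<dots> = c * mean Y + d"
    using assms unfolding strategy_def mean_def by simp
  finally show ?thesis .
qed

lemma payoff_U_E_ge:
  assumes "strategy Y" "v \<ge> 0"
  shows "payoff v (U_E m) Y \<ge> v * (1 - (mean Y + 1) / (2 * real m + 2)) - real m"
proof -
  have "measure_pmf.expectation Y (W (U_E m)) \<le> 1 / (2 * real m + 2) * mean Y + 1 / (2 * real m + 2)"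
    by (rule E_W_le[OF assms(1)]) (use W_U_E_le in \<open>simp add: add_divide_distrib\<close>)
  then have "measure_pmf.expectation (U_E m) (W Y) \<ge> 1 - (mean Y + 1) / (2 * real m + 2)"
    using EW_sum[of "U_E m" Y] by (simp add: add_divide_distrib)
  then show ?thesis unfolding payoff_W mean_U_E using assms(2)
    by (simp add: mult_left_mono)
qed

lemma payoff_U_O_ge:
  assumes "strategy Y" "v \<ge> 0"
  shows "payoff v (U_O (Suc m)) Y \<ge> v * (1 - mean Y / (2 * real m + 2)) - (real m + 1)"
proof -
  have "measure_pmf.expectation Y (W (U_O (Suc m))) \<le> 1 / (2 * real m + 2) * mean Y + 0"
    by (rule E_W_le[OF assms(1)]) (use W_U_O_le in simp)
  then have "measure_pmf.expectation (U_O (Suc m)) (W Y) \<ge> 1 - mean Y / (2 * real m + 2)"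
    using EW_sum[of "U_O (Suc m)" Y] by simp
  then show ?thesis unfolding payoff_W mean_U_O using assms(2)
    by (simp add: mult_left_mono)
qed


lemma key_ineq:
  fixes v M x a :: real
  assumes v: "v > 0" and M: "M > 0" and a0: "0 < a" and a1: "a < 1"
    and e: "v * x \<ge> a * M" and o: "v * (x - 1) \<ge> (a - 1) * M"
  shows "x \<ge> a" "x = a \<Longrightarrow> v = M"
proof -
  show "x \<ge> a"
  proof (cases "v \<le> M")
    case True
    then have "a * v \<le> a * M" using a0 by (simp add: mult_left_mono)
    then have "v * a \<le> v * x" using e by (simp add: mult.commute)
    then show ?thesis using v by simp
  next
    case False
    then have "(1 - a) * M \<le> (1 - a) * v" using a1 by (simp add: mult_left_mono)
    then have "v * (a - 1) \<le> v * (x - 1)" using o by (simp add: algebra_simps)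
    then show ?thesis using v by simp
  qed
next
  assume "x = a"
  then have 1: "a * M \<le> a * v" and 2: "(1 - a) * v \<le> (1 - a) * M"
    using e o by (simp_all add: algebra_simps)
  from 1 have "M \<le> v" using a0 by simp
  moreover from 2 have "v \<le> M" using a1 by simp
  ultimately show "v = M" by simp
qed

lemma conv_E:
  fixes v M s a b u m :: real
  assumes M: "M = 2 * m + 2" "m \<ge> 0" and u: "u = v * s - (m + a)"
    and h: "u \<ge> v * (1 - (m + b + 1) / M) - m"
  shows "v * (M * s - m - 1 + b) \<ge> a * M"
proof -
  have Mp: "M > 0" using M by simp
  have "v * (1 - (m + b + 1) / M) = (v * M - v * (m + b + 1)) / M" using Mp by (simp add: field_simps)
  then have "v * s - (m + a) \<ge> (v * M - v * (m + b + 1)) / M - m" using h u by simp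
  then have "M * (v * s - (m + a)) \<ge> (v * M - v * (m + b + 1)) - M * m" using Mp by (simp add: field_simps)
  then show ?thesis using M by (simp add: algebra_simps)
qed

lemma conv_O:
  fixes v M s a b u m :: real
  assumes M: "M = 2 * m + 2" "m \<ge> 0" and u: "u = v * s - (m + a)"
    and h: "u \<ge> v * (1 - (m + b) / M) - (m + 1)"
  shows "v * ((M * s - m - 1 + b) - 1) \<ge> (a - 1) * M"
proof -
  have Mp: "M > 0" using M by simp
  have "v * (1 - (m + b) / M) = (v * M - v * (m + b)) / M" using Mp by (simp add: field_simps)
  then have "v * s - (m + a) \<ge> (v * M - v * (m + b)) / M - (m + 1)" using h u by simp
  then have "M * (v * s - (m + a)) \<ge> (v * M - v * (m + b)) - M * (m + 1)" using Mp by (simp add: field_simps)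
  then show ?thesis using M by (simp add: algebra_simps)
qed


lemma avg_all_eq:
  fixes f :: "nat \<Rightarrow> real"
  assumes "finite S" "S \<noteq> {}" "\<And>k. k \<in> S \<Longrightarrow> f k \<le> u" "sum f S / card S = u" "k \<in> S"
  shows "f k = u"
proof -
  have c: "real (card S) > 0" using assms(1,2) by (simp add: card_gt_0_iff)
  have "sum f S = real (card S) * u" using assms(4) c by (simp add: field_simps)
  then have eq: "(\<Sum>j\<in>S. u - f j) = 0" by (simp add: sum_subtractf)
  have nn: "\<And>j. j \<in> S \<Longrightarrow> 0 \<le> u - f j" using assms(3) by simp
  have "\<forall>j\<in>S. u - f j = 0" using sum_nonneg_eq_0_iff[OF assms(1) nn] eq by simp
  then show ?thesis using assms(5) by simp
qed

lemma payoff_U_E_avg: "payoff v (U_E m) Y = (\<Sum>k\<in>SE m. v * W Y k - real k) / real (card (SE m))"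
proof -
  have "payoff v (U_E m) Y = measure_pmf.expectation (U_E m) (\<lambda>k. v * W Y k - real k)"
    by (rule payoff_expect[OF strategy_U_E])
  also have "\<dots> = (\<Sum>k\<in>SE m. v * W Y k - real k) / real (card (SE m))"
    unfolding U_E_eq by (rule integral_pmf_of_set[OF SE_ne SE_fin])
  finally show ?thesis .
qed

lemma payoff_U_O_avg: "payoff v (U_O (Suc m)) Y = (\<Sum>k\<in>SO (Suc m). v * W Y k - real k) / real (card (SO (Suc m)))"
proof -
  have "payoff v (U_O (Suc m)) Y = measure_pmf.expectation (U_O (Suc m)) (\<lambda>k. v * W Y k - real k)"
    by (rule payoff_expect[OF strategy_U_O])
  also have "\<dots> = (\<Sum>k\<in>SO (Suc m). v * W Y k - real k) / real (card (SO (Suc m)))"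
    unfolding U_O_eq by (rule integral_pmf_of_set[OF SO_ne SO_fin])
  finally show ?thesis .
qed

lemma W_mix_formula:
  assumes "0 \<le> l" "l \<le> 1"
  shows "(2 * real m + 2) * W (mix l (U_E m) (U_O (Suc m))) k - real k =
     (if k \<le> 2*m+1 then l else 2 * real m + 2 - real k)"
proof -
  have M: "2 * real m + 2 > 0" by simp
  show ?thesis
  proof (cases "k \<le> 2*m+1")
    case True
    then have "W (mix l (U_E m) (U_O (Suc m))) k = l * ((real k + 1) / (2 * real m + 2)) + (1 - l) * (real k / (2 * real m + 2))"
      using assms by (simp add: W_mix W_U_E W_U_O)
    also have "\<dots> = (l * (real k + 1) + (1 - l) * real k) / (2 * real m + 2)"
      by (simp only: times_divide_eq_right add_divide_distrib[symmetric])
    also have "l * (real k + 1) + (1 - l) * real k = real k + l"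
      by (simp add: algebra_simps)
    finally have "W (mix l (U_E m) (U_O (Suc m))) k = (real k + l) / (2 * real m + 2)" .
    then show ?thesis using True M by simp
  next
    case False
    have "W (U_O (Suc m)) k = 1"
    proof (cases "k = 2*m+2")
      case True then show ?thesis by (simp add: W_U_O)
    next
      case False then show ?thesis using \<open>\<not> k \<le> 2*m+1\<close> by (simp add: W_U_O)
    qed
    then have "W (mix l (U_E m) (U_O (Suc m))) k = 1"
      using assms False by (simp add: W_mix W_U_E)
    then show ?thesis using False by simp
  qed
qed

lemma br_le:
  assumes "0 \<le> l" "l \<le> 1" "v = 2 * real m + 2"
  shows "v * W (mix l (U_E m) (U_O (Suc m))) k - real k \<le> l"
  using W_mix_formula[OF assms(1,2), of m k] assms(1,3) by (auto split: if_splits)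

lemma br_eq:
  assumes "0 \<le> l" "l \<le> 1" "v = 2 * real m + 2" "k \<le> 2*m+1"
  shows "v * W (mix l (U_E m) (U_O (Suc m))) k - real k = l"
  using W_mix_formula[OF assms(1,2), of m k] assms(3,4) by simp

lemma set_mix_le:
  "set_pmf (mix l (U_E m) (U_O (Suc m))) \<subseteq> {..2*m+1}"
  using set_mix[of l "U_E m" "U_O (Suc m)"] by (auto simp: set_U_E set_U_O SE_mem SO_mem)

lemma payoff_br_le:
  assumes "0 \<le> l" "l \<le> 1" "v = 2 * real m + 2" "strategy X'"
  shows "payoff v X' (mix l (U_E m) (U_O (Suc m))) \<le> l"
proof -
  have "payoff v X' (mix l (U_E m) (U_O (Suc m))) \<le> measure_pmf.expectation X' (\<lambda>_. l)"
    unfolding payoff_expect[OF assms(4)]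
    by (intro integral_mono integrable_W_lin assms(4) br_le assms(1-3)) auto
  then show ?thesis by simp
qed

lemma payoff_br_eq:
  assumes "0 \<le> l" "l \<le> 1" "v = 2 * real m + 2" "strategy X" "set_pmf X \<subseteq> {..2*m+1}"
  shows "payoff v X (mix l (U_E m) (U_O (Suc m))) = l"
proof -
  have "payoff v X (mix l (U_E m) (U_O (Suc m))) = measure_pmf.expectation X (\<lambda>_. l)"
    unfolding payoff_expect[OF assms(4)]
    by (intro integral_cong_AE) (use assms in \<open>auto simp: AE_measure_pmf_iff intro!: br_eq\<close>)
  then show ?thesis by simp
qed

lemma recon:
  assumes l: "0 \<le> l" "l \<le> 1" and h: "\<And>k. k \<le> 2*m+1 \<Longrightarrow> (2 * real m + 2) * W Y k - real k = l"
  shows "Y = mix l (U_E m) (U_O (Suc m))"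
proof -
  define Z where "Z = mix l (U_E m) (U_O (Suc m))"
  have hZ: "(2 * real m + 2) * W Z k - real k = l" if "k \<le> 2*m+1" for k
    unfolding Z_def using br_eq[OF l refl that] .
  have WW: "W Y k = W Z k" if "k \<le> 2*m+1" for k
  proof -
    have "(2 * real m + 2) * W Y k = (2 * real m + 2) * W Z k" using h[OF that] hZ[OF that] by linarith
    moreover have "2 * real m + 2 \<noteq> 0" by (simp add: add_nonneg_pos)
    ultimately show ?thesis by simp
  qed
  have pe: "k \<le> 2*m+1 \<Longrightarrow> pmf Y k = pmf Z k" for k
  proof (induction k)
    case 0 then show ?case using WW[of 0] by (simp add: W_0)
  next
    case (Suc k)
    then have "pmf Y k = pmf Z k" "W Y k = W Z k" "W Y (Suc k) = W Z (Suc k)" using WW by auto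
    then show ?case by (simp add: W_Suc)
  qed
  have Z0: "pmf Z k = 0" if "k > 2*m+1" for k
    unfolding Z_def using that l by (simp add: pmf_mix pmf_U_E pmf_U_O)
  have "AE x in measure_pmf Z. x \<in> {..2*m+1}"
    unfolding AE_measure_pmf_iff
  proof
    fix x assume "x \<in> set_pmf Z"
    then have "pmf Z x \<noteq> 0" by (simp add: set_pmf_iff)
    then show "x \<in> {..2*m+1}" using Z0[of x] by (cases "x \<le> 2*m+1") auto
  qed
  then have "measure_pmf.prob Z {..2*m+1} = 1" by (simp add: measure_pmf.prob_eq_1)
  moreover have "measure_pmf.prob Y {..2*m+1} = measure_pmf.prob Z {..2*m+1}"
    by (simp add: measure_measure_pmf_finite pe)
  ultimately have PY: "measure_pmf.prob Y {..2*m+1} = 1" by simp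
  have Y0: "pmf Y k = 0" if "k > 2*m+1" for k
  proof -
    have "measure_pmf.prob Y ({..2*m+1} \<union> {k}) = measure_pmf.prob Y {..2*m+1} + pmf Y k"
      using that by (subst measure_pmf.finite_measure_Union) (auto simp: measure_pmf_single)
    moreover have "measure_pmf.prob Y ({..2*m+1} \<union> {k}) \<le> 1" by simp
    ultimately show ?thesis using PY pmf_nonneg[of Y k] by linarith
  qed
  show ?thesis unfolding Z_def[symmetric]
  proof (rule pmf_eqI)
    fix k show "pmf Y k = pmf Z k"
      using pe[of k] Y0[of k] Z0[of k] by (cases "k \<le> 2*m+1") auto
  qed
qed



lemma fwd:
  fixes v1 v2 \<alpha> \<beta> :: real and m :: nat and X Y :: "nat pmf"
  assumes "v1 \<ge> v2" and "v2 > 0"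
    and "0 < \<beta>" and "\<beta> \<le> \<alpha>" and "\<alpha> < 1"
    and SX: "strategy X" and SY: "strategy Y"
    and mX: "mean X = real m + \<alpha>" and mY: "mean Y = real m + \<beta>"
    and N: "nash v1 v2 X Y"
  shows "v1 = 2 * real m + 2 \<and> v2 = 2 * real m + 2 \<and>
         X = mix (1 - \<alpha>) (U_E m) (U_O (Suc m)) \<and> Y = mix (1 - \<beta>) (U_E m) (U_O (Suc m)) \<and>
         payoff v1 X Y = 1 - \<beta> \<and> payoff v2 Y X = 1 - \<alpha>"
proof -
  define M where "M = 2 * real m + 2"
  have Mp: "M > 0" unfolding M_def by simp
  have v1p: "v1 > 0" using assms by linarith
  have a0: "0 < \<alpha>" and b1: "\<beta> < 1" using assms by linarith+
  have dev1: "\<And>X'. strategy X' \<Longrightarrow> payoff v1 X' Y \<le> payoff v1 X Y"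
    and dev2: "\<And>Y'. strategy Y' \<Longrightarrow> payoff v2 Y' X \<le> payoff v2 Y X"
    using N unfolding nash_def by auto
  define u1 where "u1 = payoff v1 X Y"
  define u2 where "u2 = payoff v2 Y X"
  define s where "s = measure_pmf.expectation X (W Y)"
  define t where "t = measure_pmf.expectation Y (W X)"
  have st: "s + t = 1" unfolding s_def t_def by (rule EW_sum)
  have u1e: "u1 = v1 * s - (real m + \<alpha>)" unfolding u1_def s_def payoff_W mX ..
  have u2e: "u2 = v2 * t - (real m + \<beta>)" unfolding u2_def t_def payoff_W mY ..
  have E1: "u1 \<ge> v1 * (1 - (real m + \<beta> + 1) / M) - real m"
    using dev1[OF strategy_U_E, of m] payoff_U_E_ge[OF SY, of v1 m] v1p
    unfolding u1_def M_def mY by linarith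
  have O1: "u1 \<ge> v1 * (1 - (real m + \<beta>) / M) - (real m + 1)"
    using dev1[OF strategy_U_O, of m] payoff_U_O_ge[OF SY, of v1 m] v1p
    unfolding u1_def M_def mY by linarith
  have E2: "u2 \<ge> v2 * (1 - (real m + \<alpha> + 1) / M) - real m"
    using dev2[OF strategy_U_E, of m] payoff_U_E_ge[OF SX, of v2 m] assms(2)
    unfolding u2_def M_def mX by linarith
  have O2: "u2 \<ge> v2 * (1 - (real m + \<alpha>) / M) - (real m + 1)"
    using dev2[OF strategy_U_O, of m] payoff_U_O_ge[OF SX, of v2 m] assms(2)
    unfolding u2_def M_def mX by linarith
  have Mm: "M = 2 * real m + 2" "real m \<ge> 0" unfolding M_def by simp_all
  have k1e: "v1 * (M * s - real m - 1 + \<beta>) \<ge> \<alpha> * M"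
    by (rule conv_E[OF Mm u1e E1])
  have k1o: "v1 * ((M * s - real m - 1 + \<beta>) - 1) \<ge> (\<alpha> - 1) * M"
    by (rule conv_O[OF Mm u1e O1])
  have k2e: "v2 * (M * t - real m - 1 + \<alpha>) \<ge> \<beta> * M"
    by (rule conv_E[OF Mm u2e E2])
  have k2o: "v2 * ((M * t - real m - 1 + \<alpha>) - 1) \<ge> (\<beta> - 1) * M"
    by (rule conv_O[OF Mm u2e O2])
  have x1: "M * s - real m - 1 + \<beta> \<ge> \<alpha>"
    by (rule key_ineq(1)[OF v1p Mp a0 \<open>\<alpha> < 1\<close> k1e k1o])
  have x2: "M * t - real m - 1 + \<alpha> \<ge> \<beta>"
    by (rule key_ineq(1)[OF \<open>v2 > 0\<close> Mp \<open>0 < \<beta>\<close> b1 k2e k2o])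
  have sum: "M * s + M * t = M" using st by (metis distrib_left mult.right_neutral)
  have x1e: "M * s - real m - 1 + \<beta> = \<alpha>" using x1 x2 sum unfolding M_def by linarith
  have x2e: "M * t - real m - 1 + \<alpha> = \<beta>" using x1 x2 sum unfolding M_def by linarith
  have v1M: "v1 = M" by (rule key_ineq(2)[OF v1p Mp a0 \<open>\<alpha> < 1\<close> k1e k1o x1e])
  have v2M: "v2 = M" by (rule key_ineq(2)[OF \<open>v2 > 0\<close> Mp \<open>0 < \<beta>\<close> b1 k2e k2o x2e])
  have u1M: "u1 = M * s - (real m + \<alpha>)" using u1e v1M by simp
  have u1v: "u1 = 1 - \<beta>" using u1M x1e by linarith
  have u2M: "u2 = M * t - (real m + \<beta>)" using u2e v2M by simp
  have u2v: "u2 = 1 - \<alpha>" using u2M x2e by linarith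
  have lowE: "M * (1 - (real m + \<gamma> + 1) / M) - real m = 1 - \<gamma>" for \<gamma>
    using Mp unfolding M_def by (simp add: field_simps)
  have lowO: "M * (1 - (real m + \<gamma>) / M) - (real m + 1) = 1 - \<gamma>" for \<gamma>
    using Mp unfolding M_def by (simp add: field_simps)
  have P1: "payoff M X Y = 1 - \<beta>" using u1v u1_def v1M by simp
  have f1le: "M * W Y k - real k \<le> 1 - \<beta>" for k
    using dev1[OF strategy_return, of k] P1 v1M by (simp add: payoff_return)
  have pE1: "payoff M (U_E m) Y = 1 - \<beta>"
  proof -
    have "payoff M (U_E m) Y \<le> 1 - \<beta>" using dev1[OF strategy_U_E, of m] P1 v1M by simp
    moreover have "payoff M (U_E m) Y \<ge> 1 - \<beta>"
      using payoff_U_E_ge[OF SY, of M m] Mp lowE[of \<beta>] unfolding M_def mY by linarith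
    ultimately show ?thesis by linarith
  qed
  have pO1: "payoff M (U_O (Suc m)) Y = 1 - \<beta>"
  proof -
    have "payoff M (U_O (Suc m)) Y \<le> 1 - \<beta>" using dev1[OF strategy_U_O, of m] P1 v1M by simp
    moreover have "payoff M (U_O (Suc m)) Y \<ge> 1 - \<beta>"
      using payoff_U_O_ge[OF SY, of M m] Mp lowO[of \<beta>] unfolding M_def mY by linarith
    ultimately show ?thesis by linarith
  qed
  have f1eq: "M * W Y k - real k = 1 - \<beta>" if "k \<le> 2*m+1" for k
  proof (cases "even k")
    case True
    then have "k \<le> 2*m" using that by presburger
    then have "k \<in> SE m" using True by (simp add: SE_mem)
    then show ?thesis using avg_all_eq[OF SE_fin SE_ne, where f="\<lambda>k. M * W Y k - real k" and u="1 - \<beta>" and k=k] f1le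
      pE1 unfolding payoff_U_E_avg by blast
  next
    case False
    then have "k \<in> SO (Suc m)" using that by (simp add: SO_mem)
    then show ?thesis using avg_all_eq[OF SO_fin SO_ne, where f="\<lambda>k. M * W Y k - real k" and u="1 - \<beta>" and k=k] f1le
      pO1 unfolding payoff_U_O_avg by blast
  qed
  have Yeq: "Y = mix (1 - \<beta>) (U_E m) (U_O (Suc m))"
    by (rule recon) (use f1eq \<open>0 < \<beta>\<close> b1 in \<open>auto simp: M_def\<close>)
  have P2: "payoff M Y X = 1 - \<alpha>" using u2v u2_def v2M by simp
  have f2le: "M * W X k - real k \<le> 1 - \<alpha>" for k
    using dev2[OF strategy_return, of k] P2 v2M by (simp add: payoff_return)
  have pE2: "payoff M (U_E m) X = 1 - \<alpha>"
  proof -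
    have "payoff M (U_E m) X \<le> 1 - \<alpha>" using dev2[OF strategy_U_E, of m] P2 v2M by simp
    moreover have "payoff M (U_E m) X \<ge> 1 - \<alpha>"
      using payoff_U_E_ge[OF SX, of M m] Mp lowE[of \<alpha>] unfolding M_def mX by linarith
    ultimately show ?thesis by linarith
  qed
  have pO2: "payoff M (U_O (Suc m)) X = 1 - \<alpha>"
  proof -
    have "payoff M (U_O (Suc m)) X \<le> 1 - \<alpha>" using dev2[OF strategy_U_O, of m] P2 v2M by simp
    moreover have "payoff M (U_O (Suc m)) X \<ge> 1 - \<alpha>"
      using payoff_U_O_ge[OF SX, of M m] Mp lowO[of \<alpha>] unfolding M_def mX by linarith
    ultimately show ?thesis by linarith
  qed
  have f2eq: "M * W X k - real k = 1 - \<alpha>" if "k \<le> 2*m+1" for k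
  proof (cases "even k")
    case True
    then have "k \<le> 2*m" using that by presburger
    then have "k \<in> SE m" using True by (simp add: SE_mem)
    then show ?thesis using avg_all_eq[OF SE_fin SE_ne, where f="\<lambda>k. M * W X k - real k" and u="1 - \<alpha>" and k=k] f2le
      pE2 unfolding payoff_U_E_avg by blast
  next
    case False
    then have "k \<in> SO (Suc m)" using that by (simp add: SO_mem)
    then show ?thesis using avg_all_eq[OF SO_fin SO_ne, where f="\<lambda>k. M * W X k - real k" and u="1 - \<alpha>" and k=k] f2le
      pO2 unfolding payoff_U_O_avg by blast
  qed
  have Xeq: "X = mix (1 - \<alpha>) (U_E m) (U_O (Suc m))"
    by (rule recon) (use f2eq a0 \<open>\<alpha> < 1\<close> in \<open>auto simp: M_def\<close>)
  show ?thesis using v1M v2M Xeq Yeq u1v u2v unfolding M_def u1_def u2_def by simp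
qed

lemma bwd:
  fixes v1 v2 \<alpha> \<beta> :: real and m :: nat and X Y :: "nat pmf"
  assumes "0 < \<beta>" and "\<beta> \<le> \<alpha>" and "\<alpha> < 1"
    and SX: "strategy X" and SY: "strategy Y"
    and v1: "v1 = 2 * real m + 2" and v2: "v2 = 2 * real m + 2"
    and X: "X = mix (1 - \<alpha>) (U_E m) (U_O (Suc m))" and Y: "Y = mix (1 - \<beta>) (U_E m) (U_O (Suc m))"
  shows "nash v1 v2 X Y"
proof -
  have l1: "0 \<le> 1 - \<beta>" "1 - \<beta> \<le> 1" and l2: "0 \<le> 1 - \<alpha>" "1 - \<alpha> \<le> 1" using assms by linarith+
  have p1: "payoff v1 X Y = 1 - \<beta>"
    unfolding Y by (rule payoff_br_eq[OF l1 v1 SX]) (unfold X, rule set_mix_le)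
  have p2: "payoff v2 Y X = 1 - \<alpha>"
    unfolding X by (rule payoff_br_eq[OF l2 v2 SY]) (unfold Y, rule set_mix_le)
  show ?thesis unfolding nash_def
    using SX SY p1 p2 payoff_br_le[OF l1 v1] payoff_br_le[OF l2 v2] X Y by auto
qed

theorem proposition3:
  fixes v1 v2 \<alpha> \<beta> :: real and m :: nat and X Y :: "nat pmf"
  assumes "v1 \<ge> v2" and "v2 > 0"
    and "0 < \<beta>" and "\<beta> \<le> \<alpha>" and "\<alpha> < 1"
    and "strategy X" and "strategy Y"
    and "mean X = real m + \<alpha>" and "mean Y = real m + \<beta>"
  shows "(nash v1 v2 X Y \<longleftrightarrow>
            (v1 / 2 = real m + 1 \<and> v2 / 2 = real m + 1 \<and>
             X = mix (1 - \<alpha>) (U_E m) (U_O (m + 1)) \<and>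
             Y = mix (1 - \<beta>) (U_E m) (U_O (m + 1))))
         \<and> (nash v1 v2 X Y \<longrightarrow>
              payoff v1 X Y = 1 - \<beta> \<and> payoff v2 Y X = 1 - \<alpha>)"
proof -
  have e: "m + 1 = Suc m" by simp
  have h1: "v1 / 2 = real m + 1 \<longleftrightarrow> v1 = 2 * real m + 2" by auto
  have h2: "v2 / 2 = real m + 1 \<longleftrightarrow> v2 = 2 * real m + 2" by auto
  show ?thesis unfolding e h1 h2
    using fwd[OF assms] bwd[OF assms(3-7)] by blast
qed


end
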